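(* In a Douglian pre-Hilbert $*$-category, every contraction has a codilator.
   Context: A $*$-category is a category with a choice of $f^*\colon Y\to X$ for each $f\colon X\to Y$ such that $1^*=1$, $(gf)^*=f^*g^*$, $(f^* )^*=f$; $f$ is an isometry if $f^*f=1$. A pre-Hilbert $*$-category is a $*$-category with (R1) a zero object, (R2) orthonormal biproducts of all pairs of objects (biproducts $(X,s_1,r_1,s_2,r_2)$ with $r_k=s_k^*$), (R3) an isometric kernel for every morphism, and (R4) every diagonal $\Delta\colon X\to X\oplus X$ a kernel of some morphism. Such a category is additive. For Hermitian endomorphisms $a,b$ of $A$, $a\leq b$ means $b-a=y^*y$ for some $y\colon A\to Y$. A morphism $f$ is a contraction if $f^*f\leq 1$. A morphism $f\colon A\to X$ is Douglian if for every morphism $g\colon A\to Y$ with $g^*g=f^*f$ there exists $h\colon X\to Y$ with $hf=g$; a pre-Hilbert $*$-category is Douglian if all its morphisms are Douglian. A codilation of $f\colon X\to Y$ is a cospan $(T,t_1,t_2)$ with $t_1\colon X\to T$, $t_2\colon Y\to T$ isometries and $t_2^*t_1=f$. A codilator of $f$ is a codilation $(S,s_1,s_2)$ such that for every codilation $(T,t_1,t_2)$ of $f$ there is a unique isometry $t\colon S\to T$ with $ts_1=t_1$ and $ts_2=t_2$. *)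

theory Defs
  imports Main
begin

text \<open>A (small, set-based) category with an involution.  Composition
  Comp C g f means g after f.\<close>

record ('o, 'm) starcat =
  Obj  :: "'o set"
  Arr  :: "'m set"
  Dom  :: "'m \<Rightarrow> 'o"
  Cod  :: "'m \<Rightarrow> 'o"
  Id   :: "'o \<Rightarrow> 'm"
  Comp :: "'m \<Rightarrow> 'm \<Rightarrow> 'm"
  Star :: "'m \<Rightarrow> 'm"

definition hom :: "('o, 'm) starcat \<Rightarrow> 'o \<Rightarrow> 'o \<Rightarrow> 'm set" where
  "hom C A B = {f \<in> Arr C. Dom C f = A \<and> Cod C f = B}"

definition category :: "('o, 'm) starcat \<Rightarrow> bool" where
  "category C \<longleftrightarrow>
     (\<forall>f\<in>Arr C. Dom C f \<in> Obj C \<and> Cod C f \<in> Obj C) \<and>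
     (\<forall>A\<in>Obj C. Id C A \<in> hom C A A) \<and>
     (\<forall>f\<in>Arr C. \<forall>g\<in>Arr C. Cod C f = Dom C g \<longrightarrow> Comp C g f \<in> hom C (Dom C f) (Cod C g)) \<and>
     (\<forall>f\<in>Arr C. Comp C (Id C (Cod C f)) f = f \<and> Comp C f (Id C (Dom C f)) = f) \<and>
     (\<forall>f\<in>Arr C. \<forall>g\<in>Arr C. \<forall>h\<in>Arr C. Cod C f = Dom C g \<longrightarrow> Cod C g = Dom C h \<longrightarrow>
        Comp C h (Comp C g f) = Comp C (Comp C h g) f)"

definition star_category :: "('o, 'm) starcat \<Rightarrow> bool" where
  "star_category C \<longleftrightarrow> category C \<and>
     (\<forall>f\<in>Arr C. Star C f \<in> hom C (Cod C f) (Dom C f)) \<and>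
     (\<forall>A\<in>Obj C. Star C (Id C A) = Id C A) \<and>
     (\<forall>f\<in>Arr C. \<forall>g\<in>Arr C. Cod C f = Dom C g \<longrightarrow>
        Star C (Comp C g f) = Comp C (Star C f) (Star C g)) \<and>
     (\<forall>f\<in>Arr C. Star C (Star C f) = f)"

definition isometry :: "('o, 'm) starcat \<Rightarrow> 'm \<Rightarrow> bool" where
  "isometry C f \<longleftrightarrow> f \<in> Arr C \<and> Comp C (Star C f) f = Id C (Dom C f)"

definition zero_object :: "('o, 'm) starcat \<Rightarrow> 'o \<Rightarrow> bool" where
  "zero_object C Z \<longleftrightarrow> Z \<in> Obj C \<and>
     (\<forall>A\<in>Obj C. (\<exists>!f. f \<in> hom C Z A) \<and> (\<exists>!f. f \<in> hom C A Z))"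

definition zero_map :: "('o, 'm) starcat \<Rightarrow> 'o \<Rightarrow> 'o \<Rightarrow> 'm \<Rightarrow> bool" where
  "zero_map C A B f \<longleftrightarrow> f \<in> hom C A B \<and>
     (\<exists>Z g h. zero_object C Z \<and> g \<in> hom C A Z \<and> h \<in> hom C Z B \<and> f = Comp C h g)"

definition biproduct :: "('o, 'm) starcat \<Rightarrow> 'o \<Rightarrow> 'o \<Rightarrow> 'o \<Rightarrow> 'm \<Rightarrow> 'm \<Rightarrow> 'm \<Rightarrow> 'm \<Rightarrow> bool" where
  "biproduct C A B X s1 r1 s2 r2 \<longleftrightarrow>
     A \<in> Obj C \<and> B \<in> Obj C \<and> X \<in> Obj C \<and>
     s1 \<in> hom C A X \<and> r1 \<in> hom C X A \<and> s2 \<in> hom C B X \<and> r2 \<in> hom C X B \<and>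
     Comp C r1 s1 = Id C A \<and> Comp C r2 s2 = Id C B \<and>
     zero_map C A B (Comp C r2 s1) \<and> zero_map C B A (Comp C r1 s2) \<and>
     (\<forall>Z\<in>Obj C. \<forall>f\<in>hom C Z A. \<forall>g\<in>hom C Z B.
        \<exists>!h. h \<in> hom C Z X \<and> Comp C r1 h = f \<and> Comp C r2 h = g) \<and>
     (\<forall>Z\<in>Obj C. \<forall>f\<in>hom C A Z. \<forall>g\<in>hom C B Z.
        \<exists>!h. h \<in> hom C X Z \<and> Comp C h s1 = f \<and> Comp C h s2 = g)"

definition orthonormal_biproduct :: "('o, 'm) starcat \<Rightarrow> 'o \<Rightarrow> 'o \<Rightarrow> 'o \<Rightarrow> 'm \<Rightarrow> 'm \<Rightarrow> 'm \<Rightarrow> 'm \<Rightarrow> bool" where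
  "orthonormal_biproduct C A B X s1 r1 s2 r2 \<longleftrightarrow>
     biproduct C A B X s1 r1 s2 r2 \<and> r1 = Star C s1 \<and> r2 = Star C s2"

definition kernel :: "('o, 'm) starcat \<Rightarrow> 'm \<Rightarrow> 'm \<Rightarrow> bool" where
  "kernel C f k \<longleftrightarrow> f \<in> Arr C \<and> k \<in> Arr C \<and> Cod C k = Dom C f \<and>
     zero_map C (Dom C k) (Cod C f) (Comp C f k) \<and>
     (\<forall>g\<in>Arr C. Cod C g = Dom C f \<longrightarrow> zero_map C (Dom C g) (Cod C f) (Comp C f g) \<longrightarrow>
        (\<exists>!h. h \<in> hom C (Dom C g) (Dom C k) \<and> Comp C k h = g))"

definition pre_hilbert_star_category :: "('o, 'm) starcat \<Rightarrow> bool" where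
  "pre_hilbert_star_category C \<longleftrightarrow> star_category C \<and>
     \<comment> \<open>(R1)\<close> (\<exists>Z. zero_object C Z) \<and>
     \<comment> \<open>(R2)\<close> (\<forall>A\<in>Obj C. \<forall>B\<in>Obj C. \<exists>X s1 r1 s2 r2. orthonormal_biproduct C A B X s1 r1 s2 r2) \<and>
     \<comment> \<open>(R3)\<close> (\<forall>f\<in>Arr C. \<exists>k. kernel C f k \<and> isometry C k) \<and>
     \<comment> \<open>(R4)\<close> (\<forall>X P s1 r1 s2 r2 d. orthonormal_biproduct C X X P s1 r1 s2 r2 \<and>
                 d \<in> hom C X P \<and> Comp C r1 d = Id C X \<and> Comp C r2 d = Id C X
                 \<longrightarrow> (\<exists>f. kernel C f d))"

text \<open>The (biproduct-induced) sum of parallel morphisms: h = f + g, i.e.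
  h = \<nabla> \<circ> \<langle>f, g\<rangle> for a biproduct of Cod f with itself.\<close>
definition is_sum :: "('o, 'm) starcat \<Rightarrow> 'm \<Rightarrow> 'm \<Rightarrow> 'm \<Rightarrow> bool" where
  "is_sum C f g h \<longleftrightarrow> f \<in> Arr C \<and> g \<in> hom C (Dom C f) (Cod C f) \<and>
     (\<exists>P i1 p1 i2 p2 u n. biproduct C (Cod C f) (Cod C f) P i1 p1 i2 p2 \<and>
        u \<in> hom C (Dom C f) P \<and> Comp C p1 u = f \<and> Comp C p2 u = g \<and>
        n \<in> hom C P (Cod C f) \<and> Comp C n i1 = Id C (Cod C f) \<and> Comp C n i2 = Id C (Cod C f) \<and>
        h = Comp C n u)"

definition hermitian :: "('o, 'm) starcat \<Rightarrow> 'm \<Rightarrow> bool" where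
  "hermitian C a \<longleftrightarrow> a \<in> Arr C \<and> Dom C a = Cod C a \<and> Star C a = a"

text \<open>a \<le> b iff b - a = y* y for some y; in the additive hom-groups
  b - a = c is the same as a + c = b.\<close>
definition herm_le :: "('o, 'm) starcat \<Rightarrow> 'm \<Rightarrow> 'm \<Rightarrow> bool" where
  "herm_le C a b \<longleftrightarrow> hermitian C a \<and> hermitian C b \<and> Dom C a = Dom C b \<and>
     (\<exists>y. y \<in> Arr C \<and> Dom C y = Dom C a \<and> is_sum C a (Comp C (Star C y) y) b)"

definition contraction :: "('o, 'm) starcat \<Rightarrow> 'm \<Rightarrow> bool" where
  "contraction C f \<longleftrightarrow> f \<in> Arr C \<and>
     herm_le C (Comp C (Star C f) f) (Id C (Dom C f))"

definition douglian_morphism :: "('o, 'm) starcat \<Rightarrow> 'm \<Rightarrow> bool" where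
  "douglian_morphism C f \<longleftrightarrow> f \<in> Arr C \<and>
     (\<forall>g\<in>Arr C. Dom C g = Dom C f \<longrightarrow>
        Comp C (Star C g) g = Comp C (Star C f) f \<longrightarrow>
        (\<exists>h. h \<in> hom C (Cod C f) (Cod C g) \<and> Comp C h f = g))"

definition douglian_pre_hilbert_star_category :: "('o, 'm) starcat \<Rightarrow> bool" where
  "douglian_pre_hilbert_star_category C \<longleftrightarrow> pre_hilbert_star_category C \<and>
     (\<forall>f\<in>Arr C. douglian_morphism C f)"

definition codilation :: "('o, 'm) starcat \<Rightarrow> 'm \<Rightarrow> 'o \<Rightarrow> 'm \<Rightarrow> 'm \<Rightarrow> bool" where
  "codilation C f T t1 t2 \<longleftrightarrow> f \<in> Arr C \<and> T \<in> Obj C \<and>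
     t1 \<in> hom C (Dom C f) T \<and> t2 \<in> hom C (Cod C f) T \<and>
     isometry C t1 \<and> isometry C t2 \<and> Comp C (Star C t2) t1 = f"

definition codilator :: "('o, 'm) starcat \<Rightarrow> 'm \<Rightarrow> 'o \<Rightarrow> 'm \<Rightarrow> 'm \<Rightarrow> bool" where
  "codilator C f S s1 s2 \<longleftrightarrow> codilation C f S s1 s2 \<and>
     (\<forall>T t1 t2. codilation C f T t1 t2 \<longrightarrow>
        (\<exists>!t. t \<in> hom C S T \<and> isometry C t \<and> Comp C t s1 = t1 \<and> Comp C t s2 = t2))"

end

theory Submission imports Defs begin

context
  fixes C :: "('o, 'm) starcat"
  assumes sc: "star_category C"
begin

lemma cat: "category C" using sc unfolding star_category_def by blast

lemma hom_obj: "f \<in> hom C A B \<Longrightarrow> A \<in> Obj C \<and> B \<in> Obj C"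
  using cat unfolding category_def hom_def by auto

lemma hom_arr: "f \<in> hom C A B \<Longrightarrow> f \<in> Arr C \<and> Dom C f = A \<and> Cod C f = B"
  unfolding hom_def by auto

lemma arr_hom: "f \<in> Arr C \<Longrightarrow> f \<in> hom C (Dom C f) (Cod C f)"
  unfolding hom_def by auto

lemma comp_hom: "f \<in> hom C A B \<Longrightarrow> g \<in> hom C B D \<Longrightarrow> Comp C g f \<in> hom C A D"
  using cat unfolding category_def hom_def by auto

lemma id_hom: "A \<in> Obj C \<Longrightarrow> Id C A \<in> hom C A A"
  using cat unfolding category_def by auto

lemma id_l: "f \<in> hom C A B \<Longrightarrow> Comp C (Id C B) f = f"
  using cat unfolding category_def hom_def by auto

lemma id_r: "f \<in> hom C A B \<Longrightarrow> Comp C f (Id C A) = f"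
  using cat unfolding category_def hom_def by auto

lemma assoc: "f \<in> hom C A B \<Longrightarrow> g \<in> hom C B D \<Longrightarrow> h \<in> hom C D E \<Longrightarrow>
   Comp C h (Comp C g f) = Comp C (Comp C h g) f"
  using cat unfolding category_def hom_def by auto

lemma star_hom: "f \<in> hom C A B \<Longrightarrow> Star C f \<in> hom C B A"
  using sc unfolding star_category_def hom_def by auto

lemma star_comp: "f \<in> hom C A B \<Longrightarrow> g \<in> hom C B D \<Longrightarrow>
   Star C (Comp C g f) = Comp C (Star C f) (Star C g)"
  using sc unfolding star_category_def hom_def by auto

lemma star_star: "f \<in> hom C A B \<Longrightarrow> Star C (Star C f) = f"
  using sc unfolding star_category_def hom_def by auto

lemma star_id: "A \<in> Obj C \<Longrightarrow> Star C (Id C A) = Id C A"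
  using sc unfolding star_category_def by auto

lemma zero_hom: "zero_map C A B z \<Longrightarrow> z \<in> hom C A B"
  unfolding zero_map_def by auto

lemma zero_comp_left: "zero_map C A B z \<Longrightarrow> g \<in> hom C B D \<Longrightarrow> zero_map C A D (Comp C g z)"
proof -
  assume z: "zero_map C A B z" and g: "g \<in> hom C B D"
  then obtain Z a b where Z: "zero_object C Z" "a \<in> hom C A Z" "b \<in> hom C Z B" "z = Comp C b a"
    unfolding zero_map_def by blast
  have "Comp C g z = Comp C (Comp C g b) a" using Z g assoc by blast
  moreover have "Comp C g b \<in> hom C Z D" using Z g comp_hom by blast
  moreover have "Comp C g z \<in> hom C A D" using z g zero_hom comp_hom by blast
  ultimately show ?thesis using Z unfolding zero_map_def by blast
qed

lemma zero_comp_right: "zero_map C A B z \<Longrightarrow> g \<in> hom C E A \<Longrightarrow> zero_map C E B (Comp C z g)"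
proof -
  assume z: "zero_map C A B z" and g: "g \<in> hom C E A"
  then obtain Z a b where Z: "zero_object C Z" "a \<in> hom C A Z" "b \<in> hom C Z B" "z = Comp C b a"
    unfolding zero_map_def by blast
  have "Comp C z g = Comp C b (Comp C a g)" using Z g assoc by metis
  moreover have "Comp C a g \<in> hom C E Z" using Z g comp_hom by blast
  moreover have "Comp C z g \<in> hom C E B" using z g zero_hom comp_hom by blast
  ultimately show ?thesis using Z unfolding zero_map_def by blast
qed

lemma zero_star: "zero_map C A B z \<Longrightarrow> zero_map C B A (Star C z)"
proof -
  assume z: "zero_map C A B z"
  then obtain Z a b where Z: "zero_object C Z" "a \<in> hom C A Z" "b \<in> hom C Z B" "z = Comp C b a"
    unfolding zero_map_def by blast
  have "Star C z = Comp C (Star C a) (Star C b)" using Z star_comp by blast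
  moreover have "Star C a \<in> hom C Z A" "Star C b \<in> hom C B Z" using Z star_hom by auto
  moreover have "Star C z \<in> hom C B A" using z zero_hom star_hom by blast
  ultimately show ?thesis using Z unfolding zero_map_def by blast
qed

lemma zero_unique: "zero_map C A B z \<Longrightarrow> zero_map C A B z' \<Longrightarrow> z = z'"
proof -
  assume z: "zero_map C A B z" and z': "zero_map C A B z'"
  then obtain Z a b where Z: "zero_object C Z" "a \<in> hom C A Z" "b \<in> hom C Z B" "z = Comp C b a"
    unfolding zero_map_def by blast
  obtain Z' a' b' where Z': "zero_object C Z'" "a' \<in> hom C A Z'" "b' \<in> hom C Z' B" "z' = Comp C b' a'"
    using z' unfolding zero_map_def by blast
  have ZO: "Z \<in> Obj C" "A \<in> Obj C" using Z unfolding zero_object_def using hom_obj by auto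
  obtain c where c: "c \<in> hom C Z Z'" using Z' ZO unfolding zero_object_def by blast
  have "Comp C c a \<in> hom C A Z'" using c Z comp_hom by blast
  hence 1: "Comp C c a = a'" using Z' ZO unfolding zero_object_def by blast
  have "Comp C b' c \<in> hom C Z B" using c Z' comp_hom by blast
  hence 2: "Comp C b' c = b" using Z hom_obj unfolding zero_object_def by blast
  have "z' = Comp C b' (Comp C c a)" using 1 Z' by simp
  also have "\<dots> = Comp C (Comp C b' c) a" using assoc Z c Z' by blast
  finally show "z = z'" using 2 Z by simp
qed

lemma bp_pair_ex: "biproduct C A B X s1 r1 s2 r2 \<Longrightarrow> a \<in> hom C Z A \<Longrightarrow> b \<in> hom C Z B \<Longrightarrow>
   \<exists>h. h \<in> hom C Z X \<and> Comp C r1 h = a \<and> Comp C r2 h = b"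
  unfolding biproduct_def using hom_obj by blast

lemma bp_copair_ex: "biproduct C A B X s1 r1 s2 r2 \<Longrightarrow> a \<in> hom C A Z \<Longrightarrow> b \<in> hom C B Z \<Longrightarrow>
   \<exists>h. h \<in> hom C X Z \<and> Comp C h s1 = a \<and> Comp C h s2 = b"
  unfolding biproduct_def using hom_obj by blast

lemma bp_pair_uniq: "biproduct C A B X s1 r1 s2 r2 \<Longrightarrow> h \<in> hom C Z X \<Longrightarrow> h' \<in> hom C Z X \<Longrightarrow>
   Comp C r1 h = Comp C r1 h' \<Longrightarrow> Comp C r2 h = Comp C r2 h' \<Longrightarrow> h = h'"
proof -
  assume b: "biproduct C A B X s1 r1 s2 r2" and h: "h \<in> hom C Z X" "h' \<in> hom C Z X"
    and e: "Comp C r1 h = Comp C r1 h'" "Comp C r2 h = Comp C r2 h'"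
  have r: "r1 \<in> hom C X A" "r2 \<in> hom C X B" using b unfolding biproduct_def by auto
  have "Comp C r1 h \<in> hom C Z A" "Comp C r2 h \<in> hom C Z B" using r h comp_hom by auto
  moreover have "Z \<in> Obj C" using h hom_obj by blast
  ultimately have "\<exists>!k. k \<in> hom C Z X \<and> Comp C r1 k = Comp C r1 h \<and> Comp C r2 k = Comp C r2 h"
    using b unfolding biproduct_def by blast
  thus ?thesis using h e by metis
qed

lemma bp_copair_uniq: "biproduct C A B X s1 r1 s2 r2 \<Longrightarrow> h \<in> hom C X Z \<Longrightarrow> h' \<in> hom C X Z \<Longrightarrow>
   Comp C h s1 = Comp C h' s1 \<Longrightarrow> Comp C h s2 = Comp C h' s2 \<Longrightarrow> h = h'"
proof -
  assume b: "biproduct C A B X s1 r1 s2 r2" and h: "h \<in> hom C X Z" "h' \<in> hom C X Z"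
    and e: "Comp C h s1 = Comp C h' s1" "Comp C h s2 = Comp C h' s2"
  have r: "s1 \<in> hom C A X" "s2 \<in> hom C B X" using b unfolding biproduct_def by auto
  have "Comp C h s1 \<in> hom C A Z" "Comp C h s2 \<in> hom C B Z" using r h comp_hom by auto
  moreover have "Z \<in> Obj C" using h hom_obj by blast
  ultimately have "\<exists>!k. k \<in> hom C X Z \<and> Comp C k s1 = Comp C h s1 \<and> Comp C k s2 = Comp C h s2"
    using b unfolding biproduct_def by blast
  thus ?thesis using h e by metis
qed


lemma comp_arr: "f \<in> Arr C \<Longrightarrow> g \<in> Arr C \<Longrightarrow> Cod C f = Dom C g \<Longrightarrow> Comp C g f \<in> Arr C"
  using cat unfolding category_def hom_def by auto
lemma dom_comp: "f \<in> Arr C \<Longrightarrow> g \<in> Arr C \<Longrightarrow> Cod C f = Dom C g \<Longrightarrow> Dom C (Comp C g f) = Dom C f"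
  using cat unfolding category_def hom_def by auto
lemma cod_comp: "f \<in> Arr C \<Longrightarrow> g \<in> Arr C \<Longrightarrow> Cod C f = Dom C g \<Longrightarrow> Cod C (Comp C g f) = Cod C g"
  using cat unfolding category_def hom_def by auto
lemma star_arr: "f \<in> Arr C \<Longrightarrow> Star C f \<in> Arr C"
  using sc unfolding star_category_def hom_def by auto
lemma dom_star: "f \<in> Arr C \<Longrightarrow> Dom C (Star C f) = Cod C f"
  using sc unfolding star_category_def hom_def by auto
lemma cod_star: "f \<in> Arr C \<Longrightarrow> Cod C (Star C f) = Dom C f"
  using sc unfolding star_category_def hom_def by auto
lemma assoc_r: "f \<in> Arr C \<Longrightarrow> g \<in> Arr C \<Longrightarrow> h \<in> Arr C \<Longrightarrow> Cod C f = Dom C g \<Longrightarrow> Cod C g = Dom C h \<Longrightarrow>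
   Comp C (Comp C h g) f = Comp C h (Comp C g f)"
  using cat unfolding category_def by auto
lemma star_comp_a: "f \<in> Arr C \<Longrightarrow> g \<in> Arr C \<Longrightarrow> Cod C f = Dom C g \<Longrightarrow>
   Star C (Comp C g f) = Comp C (Star C f) (Star C g)"
  using sc unfolding star_category_def by auto
lemma star_star_a: "f \<in> Arr C \<Longrightarrow> Star C (Star C f) = f"
  using sc unfolding star_category_def by auto
lemma id_l_a: "f \<in> Arr C \<Longrightarrow> Cod C f = B \<Longrightarrow> Comp C (Id C B) f = f"
  using cat unfolding category_def by auto
lemma id_r_a: "f \<in> Arr C \<Longrightarrow> Dom C f = B \<Longrightarrow> Comp C f (Id C B) = f"
  using cat unfolding category_def by auto
lemma id_arr: "A \<in> Obj C \<Longrightarrow> Id C A \<in> Arr C \<and> Dom C (Id C A) = A \<and> Cod C (Id C A) = A"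
  using cat unfolding category_def hom_def by auto

lemmas CS = comp_arr dom_comp cod_comp star_arr dom_star cod_star assoc_r star_comp_a star_star_a id_l_a id_r_a

lemma bp_endo_ext:
  assumes bp: "biproduct C A B W j1 r1 j2 r2"
    and a: "a \<in> hom C W W" and a': "a' \<in> hom C W W"
    and e11: "Comp C r1 (Comp C a j1) = Comp C r1 (Comp C a' j1)"
    and e12: "Comp C r1 (Comp C a j2) = Comp C r1 (Comp C a' j2)"
    and e21: "Comp C r2 (Comp C a j1) = Comp C r2 (Comp C a' j1)"
    and e22: "Comp C r2 (Comp C a j2) = Comp C r2 (Comp C a' j2)"
  shows "a = a'"
proof -
  have j: "j1 \<in> hom C A W" "j2 \<in> hom C B W" using bp unfolding biproduct_def by auto
  have "Comp C a j1 = Comp C a' j1"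
    by (rule bp_pair_uniq[OF bp]) (use a a' j comp_hom e11 e21 in auto)
  moreover have "Comp C a j2 = Comp C a' j2"
    by (rule bp_pair_uniq[OF bp]) (use a a' j comp_hom e12 e22 in auto)
  ultimately show ?thesis using bp_copair_uniq[OF bp a a'] by blast
qed

lemma main:
  assumes DD: "douglian_pre_hilbert_star_category C"
    and ctr: "contraction C f"
  shows "\<exists>S s1 s2. codilator C f S s1 s2"
proof -
  have PH: "pre_hilbert_star_category C" and DG: "\<forall>f\<in>Arr C. douglian_morphism C f"
    using DD unfolding douglian_pre_hilbert_star_category_def by blast+
  have R2: "\<And>A B. A \<in> Obj C \<Longrightarrow> B \<in> Obj C \<Longrightarrow> \<exists>X s1 r1 s2 r2. orthonormal_biproduct C A B X s1 r1 s2 r2"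
    using PH unfolding pre_hilbert_star_category_def by blast
  have R3: "\<And>f. f \<in> Arr C \<Longrightarrow> \<exists>k. kernel C f k \<and> isometry C k"
    using PH unfolding pre_hilbert_star_category_def by blast
  have R4: "\<And>X P s1 r1 s2 r2 d. orthonormal_biproduct C X X P s1 r1 s2 r2 \<Longrightarrow>
                 d \<in> hom C X P \<Longrightarrow> Comp C r1 d = Id C X \<Longrightarrow> Comp C r2 d = Id C X
                 \<Longrightarrow> (\<exists>g. kernel C g d)"
    using PH unfolding pre_hilbert_star_category_def by blast
  define X where "X = Dom C f"
  define Y where "Y = Cod C f"
  have fA: "f \<in> Arr C" using ctr unfolding contraction_def by blast
  have fh: "f \<in> hom C X Y" unfolding hom_def X_def Y_def using fA by simp
  have XY: "X \<in> Obj C" "Y \<in> Obj C" using fh hom_obj by auto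
  have fsh: "Star C f \<in> hom C Y X" using fh star_hom by blast
  have ffh: "Comp C (Star C f) f \<in> hom C X X" using fh fsh comp_hom by blast
  obtain y where yA: "y \<in> Arr C" and yD: "Dom C y = X"
     and ys: "is_sum C (Comp C (Star C f) f) (Comp C (Star C y) y) (Id C X)"
  proof -
    have "herm_le C (Comp C (Star C f) f) (Id C X)" using ctr unfolding contraction_def X_def by blast
    then obtain y where "y \<in> Arr C" "Dom C y = Dom C (Comp C (Star C f) f)"
       "is_sum C (Comp C (Star C f) f) (Comp C (Star C y) y) (Id C X)"
      unfolding herm_le_def by blast
    moreover have "Dom C (Comp C (Star C f) f) = X" using ffh unfolding hom_def by simp
    ultimately show ?thesis using that by simp
  qed
  define Dd where "Dd = Cod C y"
  have yh: "y \<in> hom C X Dd" unfolding hom_def Dd_def using yA yD by simp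
  have ysh: "Star C y \<in> hom C Dd X" using yh star_hom by blast
  have Dd: "Dd \<in> Obj C" using yh hom_obj by blast
  obtain P' i1' p1' i2' p2' u nab where
    bp': "biproduct C X X P' i1' p1' i2' p2'" and uh: "u \<in> hom C X P'"
    and pu1: "Comp C p1' u = Comp C (Star C f) f" and pu2: "Comp C p2' u = Comp C (Star C y) y"
    and nabh: "nab \<in> hom C P' X" and nab1: "Comp C nab i1' = Id C X" and nab2: "Comp C nab i2' = Id C X"
    and nabu: "Id C X = Comp C nab u"
  proof -
    have "Dom C (Comp C (Star C f) f) = X" "Cod C (Comp C (Star C f) f) = X" using ffh unfolding hom_def by auto
    note dc = this
    have "\<exists>P i1 p1 i2 p2 u n. biproduct C (Cod C (Comp C (Star C f) f)) (Cod C (Comp C (Star C f) f)) P i1 p1 i2 p2 \<and>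
        u \<in> hom C (Dom C (Comp C (Star C f) f)) P \<and> Comp C p1 u = (Comp C (Star C f) f) \<and> Comp C p2 u = (Comp C (Star C y) y) \<and>
        n \<in> hom C P (Cod C (Comp C (Star C f) f)) \<and> Comp C n i1 = Id C (Cod C (Comp C (Star C f) f)) \<and> Comp C n i2 = Id C (Cod C (Comp C (Star C f) f)) \<and>
        Id C X = Comp C n u" using ys unfolding is_sum_def by (rule conjunct2[OF conjunct2])
    then show ?thesis unfolding dc using that by blast
  qed
  have bp'h: "i1' \<in> hom C X P'" "i2' \<in> hom C X P'" "p1' \<in> hom C P' X" "p2' \<in> hom C P' X"
    "Comp C p1' i1' = Id C X" "Comp C p2' i2' = Id C X"
    "zero_map C X X (Comp C p2' i1')" "zero_map C X X (Comp C p1' i2')"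
    using bp' unfolding biproduct_def by blast+
  obtain Q q1 q2 where bQ: "biproduct C Y Dd Q q1 (Star C q1) q2 (Star C q2)"
  proof -
    obtain Q q1 q1s q2 q2s where "orthonormal_biproduct C Y Dd Q q1 q1s q2 q2s"
      using R2 XY Dd by blast
    then show ?thesis using that unfolding orthonormal_biproduct_def by blast
  qed
  have bQh: "q1 \<in> hom C Y Q" "q2 \<in> hom C Dd Q" "Star C q1 \<in> hom C Q Y" "Star C q2 \<in> hom C Q Dd"
    "Comp C (Star C q1) q1 = Id C Y" "Comp C (Star C q2) q2 = Id C Dd"
    "zero_map C Y Dd (Comp C (Star C q2) q1)" "zero_map C Dd Y (Comp C (Star C q1) q2)"
    using bQ unfolding biproduct_def by blast+
  have Qo: "Q \<in> Obj C" using bQh hom_obj by blast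
  obtain s1' where s1'h: "s1' \<in> hom C X Q" and s1'1: "Comp C (Star C q1) s1' = f"
    and s1'2: "Comp C (Star C q2) s1' = y"
    using bp_pair_ex[OF bQ fh yh] by blast
  have i1fh: "Comp C i1' (Star C f) \<in> hom C Y P'" using fsh bp'h comp_hom by blast
  have i2yh: "Comp C i2' (Star C y) \<in> hom C Dd P'" using ysh bp'h comp_hom by blast
  obtain phi where phih: "phi \<in> hom C Q P'" and phi1: "Comp C phi q1 = Comp C i1' (Star C f)"
    and phi2: "Comp C phi q2 = Comp C i2' (Star C y)"
    using bp_copair_ex[OF bQ i1fh i2yh] by blast
  note A = hom_arr[OF fh] hom_arr[OF fsh] hom_arr[OF yh] hom_arr[OF ysh] hom_arr[OF uh] hom_arr[OF nabh]
    hom_arr[OF bp'h(1)] hom_arr[OF bp'h(2)] hom_arr[OF bp'h(3)] hom_arr[OF bp'h(4)]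
    hom_arr[OF bQh(1)] hom_arr[OF bQh(2)] hom_arr[OF bQh(3)] hom_arr[OF bQh(4)]
    hom_arr[OF s1'h] hom_arr[OF phih]
  have pphi1: "Comp C p1' phi = Comp C (Star C f) (Star C q1)"
  proof (rule bp_copair_uniq[OF bQ])
    show "Comp C p1' phi \<in> hom C Q X" using phih bp'h comp_hom by blast
    show "Comp C (Star C f) (Star C q1) \<in> hom C Q X" using fsh bQh comp_hom by blast
    have "Comp C (Comp C p1' phi) q1 = Comp C (Comp C p1' i1') (Star C f)"
      by (simp add: CS A phi1)
    also have "\<dots> = Star C f" using bp'h by (simp add: CS A)
    also have "\<dots> = Comp C (Comp C (Star C f) (Star C q1)) q1" using bQh by (simp add: CS A)
    finally show "Comp C (Comp C p1' phi) q1 = Comp C (Comp C (Star C f) (Star C q1)) q1" .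
    have "Comp C (Comp C p1' phi) q2 = Comp C (Comp C p1' i2') (Star C y)"
      by (simp add: CS A phi2)
    moreover have "zero_map C Dd X (Comp C (Comp C p1' i2') (Star C y))"
      using zero_comp_right bp'h ysh by blast
    moreover have "Comp C (Comp C (Star C f) (Star C q1)) q2 = Comp C (Star C f) (Comp C (Star C q1) q2)"
      by (simp add: CS A)
    moreover have "zero_map C Dd X (Comp C (Star C f) (Comp C (Star C q1) q2))"
      using zero_comp_left bQh fsh by blast
    ultimately show "Comp C (Comp C p1' phi) q2 = Comp C (Comp C (Star C f) (Star C q1)) q2"
      using zero_unique by metis
  qed
  have pphi2: "Comp C p2' phi = Comp C (Star C y) (Star C q2)"
  proof (rule bp_copair_uniq[OF bQ])
    show "Comp C p2' phi \<in> hom C Q X" using phih bp'h comp_hom by blast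
    show "Comp C (Star C y) (Star C q2) \<in> hom C Q X" using ysh bQh comp_hom by blast
    have "Comp C (Comp C p2' phi) q2 = Comp C (Comp C p2' i2') (Star C y)"
      by (simp add: CS A phi2)
    also have "\<dots> = Star C y" using bp'h by (simp add: CS A)
    also have "\<dots> = Comp C (Comp C (Star C y) (Star C q2)) q2" using bQh by (simp add: CS A)
    finally show "Comp C (Comp C p2' phi) q2 = Comp C (Comp C (Star C y) (Star C q2)) q2" .
    have "Comp C (Comp C p2' phi) q1 = Comp C (Comp C p2' i1') (Star C f)"
      by (simp add: CS A phi1)
    moreover have "zero_map C Y X (Comp C (Comp C p2' i1') (Star C f))"
      using zero_comp_right bp'h fsh by blast
    moreover have "Comp C (Comp C (Star C y) (Star C q2)) q1 = Comp C (Star C y) (Comp C (Star C q2) q1)"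
      by (simp add: CS A)
    moreover have "zero_map C Y X (Comp C (Star C y) (Comp C (Star C q2) q1))"
      using zero_comp_left bQh ysh by blast
    ultimately show "Comp C (Comp C p2' phi) q1 = Comp C (Comp C (Star C y) (Star C q2)) q1"
      using zero_unique by metis
  qed
  have phis: "Comp C phi s1' = u"
  proof (rule bp_pair_uniq[OF bp'])
    show "Comp C phi s1' \<in> hom C X P'" using phih s1'h comp_hom by blast
    show "u \<in> hom C X P'" by (rule uh)
    have "Comp C p1' (Comp C phi s1') = Comp C (Comp C p1' phi) s1'" by (simp add: CS A)
    also have "\<dots> = Comp C (Star C f) f" unfolding pphi1 by (simp add: CS A s1'1)
    finally show "Comp C p1' (Comp C phi s1') = Comp C p1' u" using pu1 by simp
    have "Comp C p2' (Comp C phi s1') = Comp C (Comp C p2' phi) s1'" by (simp add: CS A)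
    also have "\<dots> = Comp C (Star C y) y" unfolding pphi2 by (simp add: CS A s1'2)
    finally show "Comp C p2' (Comp C phi s1') = Comp C p2' u" using pu2 by simp
  qed
  have s1's: "Star C s1' = Comp C nab phi"
  proof (rule bp_copair_uniq[OF bQ])
    show "Star C s1' \<in> hom C Q X" using s1'h star_hom by blast
    show "Comp C nab phi \<in> hom C Q X" using nabh phih comp_hom by blast
    have "Comp C (Star C s1') q1 = Star C (Comp C (Star C q1) s1')" by (simp add: CS A)
    also have "\<dots> = Comp C (Comp C nab i1') (Star C f)" using s1'1 nab1 by (simp add: CS A)
    finally show "Comp C (Star C s1') q1 = Comp C (Comp C nab phi) q1" by (simp add: CS A phi1)
    have "Comp C (Star C s1') q2 = Star C (Comp C (Star C q2) s1')" by (simp add: CS A)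
    also have "\<dots> = Comp C (Comp C nab i2') (Star C y)" using s1'2 nab2 by (simp add: CS A)
    finally show "Comp C (Star C s1') q2 = Comp C (Comp C nab phi) q2" by (simp add: CS A phi2)
  qed
  have s1'iso: "Comp C (Star C s1') s1' = Id C X"
    unfolding s1's using nabu phis by (simp add: CS A)
  obtain W j1 j2 where bW: "biproduct C X Y W j1 (Star C j1) j2 (Star C j2)"
  proof -
    obtain W j1 j1s j2 j2s where "orthonormal_biproduct C X Y W j1 j1s j2 j2s"
      using R2 XY by blast
    then show ?thesis using that unfolding orthonormal_biproduct_def by blast
  qed
  have bWh: "j1 \<in> hom C X W" "j2 \<in> hom C Y W" "Star C j1 \<in> hom C W X" "Star C j2 \<in> hom C W Y"
    using bW unfolding biproduct_def by blast+
  obtain m where mh: "m \<in> hom C W Q" and m1: "Comp C m j1 = s1'" and m2: "Comp C m j2 = q1"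
    using bp_copair_ex[OF bW s1'h bQh(1)] by blast
  have msh: "Star C m \<in> hom C Q W" using mh star_hom by blast
  obtain k where kk: "kernel C (Star C m) k" and kiso: "isometry C k"
    using R3 msh hom_arr by blast
  define K where "K = Dom C k"
  have kh: "k \<in> hom C K Q" using kk msh unfolding kernel_def K_def hom_def by simp
  have mk0: "zero_map C K W (Comp C (Star C m) k)" using kk msh unfolding kernel_def K_def hom_def by simp
  have ksh: "Star C k \<in> hom C Q K" using kh star_hom by blast
  obtain e where ek: "kernel C (Star C k) e" and eiso: "isometry C e"
    using R3 ksh hom_arr by blast
  define S where "S = Dom C e"
  have eh: "e \<in> hom C S Q" using ek ksh unfolding kernel_def S_def hom_def by simp
  have ke0: "zero_map C S K (Comp C (Star C k) e)" using ek ksh unfolding kernel_def S_def hom_def by simp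
  have esh: "Star C e \<in> hom C Q S" using eh star_hom by blast
  have ee: "Comp C (Star C e) e = Id C S" using eiso unfolding isometry_def S_def by simp
  have So: "S \<in> Obj C" using eh hom_obj by blast
  note A2 = A hom_arr[OF bWh(1)] hom_arr[OF bWh(2)] hom_arr[OF bWh(3)] hom_arr[OF bWh(4)]
    hom_arr[OF mh] hom_arr[OF msh] hom_arr[OF kh] hom_arr[OF ksh] hom_arr[OF eh] hom_arr[OF esh]
  have km0: "zero_map C W K (Comp C (Star C k) m)"
  proof -
    have "zero_map C W K (Star C (Comp C (Star C m) k))" using zero_star mk0 by blast
    thus ?thesis by (simp add: CS A2)
  qed
  obtain m' where m'h: "m' \<in> hom C W S" and em': "Comp C e m' = m"
  proof -
    have "\<forall>g\<in>Arr C. Cod C g = Dom C (Star C k) \<longrightarrow> zero_map C (Dom C g) (Cod C (Star C k)) (Comp C (Star C k) g) \<longrightarrow>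
        (\<exists>!h. h \<in> hom C (Dom C g) (Dom C e) \<and> Comp C e h = g)" using ek unfolding kernel_def by blast
    moreover have "m \<in> Arr C" "Cod C m = Dom C (Star C k)" "zero_map C (Dom C m) (Cod C (Star C k)) (Comp C (Star C k) m)"
      using km0 by (simp_all add: CS A2)
    ultimately have "\<exists>!h. h \<in> hom C (Dom C m) (Dom C e) \<and> Comp C e h = m" by blast
    moreover have "Dom C m = W" using A2 by simp
    ultimately have "\<exists>h. h \<in> hom C W S \<and> Comp C e h = m" unfolding S_def by metis
    thus ?thesis using that by blast
  qed
  define s1 where "s1 = Comp C m' j1"
  define s2 where "s2 = Comp C m' j2"
  have s1h: "s1 \<in> hom C X S" unfolding s1_def using m'h bWh comp_hom by blast
  have s2h: "s2 \<in> hom C Y S" unfolding s2_def using m'h bWh comp_hom by blast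
  note A3 = A2 hom_arr[OF m'h] hom_arr[OF s1h] hom_arr[OF s2h]
  have es1: "Comp C e s1 = s1'"
  proof -
    have "Comp C e s1 = Comp C (Comp C e m') j1" unfolding s1_def by (simp add: CS A3)
    thus ?thesis using m1 em' by simp
  qed
  have es2: "Comp C e s2 = q1"
  proof -
    have "Comp C e s2 = Comp C (Comp C e m') j2" unfolding s2_def by (simp add: CS A3)
    thus ?thesis using m2 em' by simp
  qed
  have eecons: "\<And>x. x \<in> Arr C \<Longrightarrow> Cod C x = S \<Longrightarrow> Comp C (Star C e) (Comp C e x) = x"
  proof -
    fix x assume x: "x \<in> Arr C" "Cod C x = S"
    have "Comp C (Star C e) (Comp C e x) = Comp C (Comp C (Star C e) e) x" using x by (simp add: CS A3)
    thus "Comp C (Star C e) (Comp C e x) = x" using x ee by (simp add: CS A3)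
  qed
  have s1iso: "Comp C (Star C s1) s1 = Id C X"
  proof -
    have "Comp C (Star C s1) s1 = Comp C (Star C (Comp C e s1)) (Comp C e s1)"
      using eecons[of s1] by (simp add: CS A3)
    thus ?thesis using es1 s1'iso by simp
  qed
  have s2iso: "Comp C (Star C s2) s2 = Id C Y"
  proof -
    have "Comp C (Star C s2) s2 = Comp C (Star C (Comp C e s2)) (Comp C e s2)"
      using eecons[of s2] by (simp add: CS A3)
    thus ?thesis using es2 bQh by simp
  qed
  have s21: "Comp C (Star C s2) s1 = f"
  proof -
    have "Comp C (Star C s2) s1 = Comp C (Star C (Comp C e s2)) (Comp C e s1)"
      using eecons[of s1] by (simp add: CS A3)
    thus ?thesis using es2 es1 s1'1 by simp
  qed
  have Pm: "zero_map C S Z u" if uh: "u \<in> hom C S Z" and u0: "zero_map C W Z (Comp C u m')" for Z u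
  proof -
    have ush: "Star C u \<in> hom C Z S" using uh star_hom by blast
    note A4 = A3 hom_arr[OF uh] hom_arr[OF ush]
    have z1: "zero_map C Z W (Comp C (Star C m') (Star C u))"
      using zero_star[OF u0] by (simp add: CS A4)
    have sm: "Star C m = Comp C (Star C m') (Star C e)" using em' by (auto simp add: CS A4)
    have "Comp C (Star C m) (Comp C e (Star C u)) = Comp C (Star C m') (Comp C (Star C e) (Comp C e (Star C u)))"
      unfolding sm by (simp add: CS A4)
    also have "\<dots> = Comp C (Star C m') (Star C u)" using eecons[of "Star C u"] by (simp add: CS A4)
    finally have z2: "zero_map C Z W (Comp C (Star C m) (Comp C e (Star C u)))" using z1 by simp
    have "\<forall>g\<in>Arr C. Cod C g = Dom C (Star C m) \<longrightarrow> zero_map C (Dom C g) (Cod C (Star C m)) (Comp C (Star C m) g) \<longrightarrow>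
        (\<exists>!h. h \<in> hom C (Dom C g) (Dom C k) \<and> Comp C k h = g)" using kk unfolding kernel_def by blast
    moreover have "Comp C e (Star C u) \<in> Arr C" "Cod C (Comp C e (Star C u)) = Dom C (Star C m)"
      "zero_map C (Dom C (Comp C e (Star C u))) (Cod C (Star C m)) (Comp C (Star C m) (Comp C e (Star C u)))"
      using z2 by (simp_all add: CS A4)
    ultimately have "\<exists>!h. h \<in> hom C (Dom C (Comp C e (Star C u))) (Dom C k) \<and> Comp C k h = Comp C e (Star C u)" by blast
    moreover have "Dom C (Comp C e (Star C u)) = Z" by (simp add: CS A4)
    ultimately obtain w where wh: "w \<in> hom C Z K" and kw: "Comp C k w = Comp C e (Star C u)"
      unfolding K_def by metis
    note A5 = A4 hom_arr[OF wh]
    have "Star C u = Comp C (Star C e) (Comp C e (Star C u))" using eecons[of "Star C u"] by (simp add: CS A4)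
    also have "\<dots> = Comp C (Comp C (Star C e) k) w" unfolding kw[symmetric] by (simp add: CS A5)
    also have "\<dots> = Comp C (Star C (Comp C (Star C k) e)) w" by (simp add: CS A5)
    finally have "zero_map C Z S (Star C u)"
      using zero_comp_right[OF zero_star[OF ke0] wh] by simp
    from zero_star[OF this] show ?thesis using star_star[OF uh] by simp
  qed
  have EQ: "u = v" if uh: "u \<in> hom C S B" and vh: "v \<in> hom C S B"
    and uv: "Comp C u m' = Comp C v m'" for B u v
  proof -
    have Bo: "B \<in> Obj C" using uh hom_obj by blast
    obtain BB b1 b2 where bB: "biproduct C B B BB b1 (Star C b1) b2 (Star C b2)"
      and obB: "orthonormal_biproduct C B B BB b1 (Star C b1) b2 (Star C b2)"
    proof -
      obtain BB b1 b1s b2 b2s where "orthonormal_biproduct C B B BB b1 b1s b2 b2s"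
        using R2 Bo by blast
      then show ?thesis using that unfolding orthonormal_biproduct_def by blast
    qed
    have bBh: "b1 \<in> hom C B BB" "b2 \<in> hom C B BB" "Star C b1 \<in> hom C BB B" "Star C b2 \<in> hom C BB B"
      using bB unfolding biproduct_def by blast+
    obtain d where dh: "d \<in> hom C B BB" and d1: "Comp C (Star C b1) d = Id C B"
       and d2: "Comp C (Star C b2) d = Id C B"
      using bp_pair_ex[OF bB id_hom[OF Bo] id_hom[OF Bo]] by blast
    obtain g where gk: "kernel C g d" using R4[OF obB dh d1 d2] by blast
    obtain uv' where uvh: "uv' \<in> hom C S BB" and uv1: "Comp C (Star C b1) uv' = u"
       and uv2: "Comp C (Star C b2) uv' = v"
      using bp_pair_ex[OF bB uh vh] by blast
    define G where "G = Cod C g"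
    have gh: "g \<in> hom C BB G" using gk dh unfolding kernel_def G_def hom_def by simp
    have gd0: "zero_map C B G (Comp C g d)" using gk dh unfolding kernel_def G_def hom_def by simp
    have um'h: "Comp C u m' \<in> hom C W B" using uh m'h comp_hom by blast
    note A4 = A3 hom_arr[OF uh] hom_arr[OF vh] hom_arr[OF bBh(1)] hom_arr[OF bBh(2)] hom_arr[OF bBh(3)]
      hom_arr[OF bBh(4)] hom_arr[OF dh] hom_arr[OF uvh] hom_arr[OF gh] hom_arr[OF um'h]
    have "Comp C uv' m' = Comp C d (Comp C u m')"
    proof (rule bp_pair_uniq[OF bB])
      show "Comp C uv' m' \<in> hom C W BB" using uvh m'h comp_hom by blast
      show "Comp C d (Comp C u m') \<in> hom C W BB" using dh um'h comp_hom by blast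
      have "Comp C (Star C b1) (Comp C uv' m') = Comp C (Comp C (Star C b1) uv') m'" by (simp add: CS A4)
      also have "\<dots> = Comp C (Comp C (Star C b1) d) (Comp C u m')" using uv1 d1 by (simp add: CS A4)
      finally show "Comp C (Star C b1) (Comp C uv' m') = Comp C (Star C b1) (Comp C d (Comp C u m'))"
        by (simp add: CS A4)
      have "Comp C (Star C b2) (Comp C uv' m') = Comp C (Comp C (Star C b2) uv') m'" by (simp add: CS A4)
      also have "\<dots> = Comp C (Comp C (Star C b2) d) (Comp C u m')" using uv2 d2 uv by (simp add: CS A4)
      finally show "Comp C (Star C b2) (Comp C uv' m') = Comp C (Star C b2) (Comp C d (Comp C u m'))"
        by (simp add: CS A4)
    qed
    hence "Comp C (Comp C g uv') m' = Comp C (Comp C g d) (Comp C u m')" by (simp add: CS A4)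
    hence "zero_map C W G (Comp C (Comp C g uv') m')" using zero_comp_right[OF gd0 um'h] by simp
    hence guv0: "zero_map C S G (Comp C g uv')" using Pm[of "Comp C g uv'" G] uvh gh comp_hom by blast
    have "\<forall>h\<in>Arr C. Cod C h = Dom C g \<longrightarrow> zero_map C (Dom C h) (Cod C g) (Comp C g h) \<longrightarrow>
        (\<exists>!x. x \<in> hom C (Dom C h) (Dom C d) \<and> Comp C d x = h)" using gk unfolding kernel_def by blast
    moreover have "uv' \<in> Arr C" "Cod C uv' = Dom C g" "zero_map C (Dom C uv') (Cod C g) (Comp C g uv')"
      using guv0 by (simp_all add: CS A4)
    ultimately have "\<exists>!x. x \<in> hom C (Dom C uv') (Dom C d) \<and> Comp C d x = uv'" by blast
    moreover have "Dom C uv' = S" "Dom C d = B" using A4 by simp_all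
    ultimately obtain x where xh: "x \<in> hom C S B" and dx: "Comp C d x = uv'" by metis
    note A5 = A4 hom_arr[OF xh]
    have "u = Comp C (Comp C (Star C b1) d) x" using uv1 dx by (simp add: CS A5)
    moreover have "v = Comp C (Comp C (Star C b2) d) x" using uv2 dx by (simp add: CS A5)
    ultimately show "u = v" using d1 d2 by simp
  qed
  have m'A: "m' \<in> Arr C" using m'h hom_arr by blast
  have douglm: "douglian_morphism C m'" using DG m'A by blast
  have codS: "codilation C f S s1 s2"
    unfolding codilation_def isometry_def using fA So s1h s2h s1iso s2iso s21 A3
    by (simp add: X_def[symmetric] Y_def[symmetric])
  have univ: "\<exists>!t. t \<in> hom C S T \<and> isometry C t \<and> Comp C t s1 = t1 \<and> Comp C t s2 = t2"
    if cT: "codilation C f T t1 t2" for T t1 t2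
  proof -
    have t1h: "t1 \<in> hom C X T" and t2h: "t2 \<in> hom C Y T" and t1iso: "Comp C (Star C t1) t1 = Id C X"
      and t2iso: "Comp C (Star C t2) t2 = Id C Y" and t21: "Comp C (Star C t2) t1 = f"
      using cT unfolding codilation_def isometry_def X_def Y_def hom_def by auto
    obtain n where nh: "n \<in> hom C W T" and n1: "Comp C n j1 = t1" and n2: "Comp C n j2 = t2"
      using bp_copair_ex[OF bW t1h t2h] by blast
    note B = A3 hom_arr[OF t1h] hom_arr[OF t2h] hom_arr[OF nh]
    have s1d: "Comp C m' j1 = s1" and s2d: "Comp C m' j2 = s2" unfolding s1_def s2_def by simp_all
    have mm: "Comp C (Star C m') m' \<in> hom C W W" using m'h star_hom comp_hom by blast
    have nn: "Comp C (Star C n) n \<in> hom C W W" using nh star_hom comp_hom by blast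
    have gen: "\<And>a b p. a \<in> Arr C \<Longrightarrow> b \<in> Arr C \<Longrightarrow> p \<in> Arr C \<Longrightarrow> Cod C a = Dom C p \<Longrightarrow> Cod C b = Dom C p \<Longrightarrow>
        Comp C (Star C a) (Comp C (Comp C (Star C p) p) b) = Comp C (Star C (Comp C p a)) (Comp C p b)"
      by (simp add: CS)
    have sw: "\<And>a b. a \<in> Arr C \<Longrightarrow> b \<in> Arr C \<Longrightarrow> Cod C a = Cod C b \<Longrightarrow>
        Comp C (Star C a) b = Star C (Comp C (Star C b) a)"
      by (simp add: CS)
    have mmnn: "Comp C (Star C m') m' = Comp C (Star C n) n"
    proof (rule bp_endo_ext[OF bW mm nn])
      show "Comp C (Star C j1) (Comp C (Comp C (Star C m') m') j1) = Comp C (Star C j1) (Comp C (Comp C (Star C n) n) j1)"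
        using gen[of j1 j1 m'] gen[of j1 j1 n] s1d n1 s1iso t1iso B by simp
      show "Comp C (Star C j2) (Comp C (Comp C (Star C m') m') j2) = Comp C (Star C j2) (Comp C (Comp C (Star C n) n) j2)"
        using gen[of j2 j2 m'] gen[of j2 j2 n] s2d n2 s2iso t2iso B by simp
      show "Comp C (Star C j2) (Comp C (Comp C (Star C m') m') j1) = Comp C (Star C j2) (Comp C (Comp C (Star C n) n) j1)"
        using gen[of j2 j1 m'] gen[of j2 j1 n] s1d n1 s2d n2 s21 t21 B by simp
      have "Comp C (Star C s1) s2 = Star C f" using sw[of s1 s2] s21 B by simp
      moreover have "Comp C (Star C t1) t2 = Star C f" using sw[of t1 t2] t21 B by simp
      ultimately show "Comp C (Star C j1) (Comp C (Comp C (Star C m') m') j2) = Comp C (Star C j1) (Comp C (Comp C (Star C n) n) j2)"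
        using gen[of j1 j2 m'] gen[of j1 j2 n] s1d n1 s2d n2 B by simp
    qed
    obtain h where hh: "h \<in> hom C S T" and hm: "Comp C h m' = n"
    proof -
      have "\<forall>g\<in>Arr C. Dom C g = Dom C m' \<longrightarrow> Comp C (Star C g) g = Comp C (Star C m') m' \<longrightarrow>
        (\<exists>h. h \<in> hom C (Cod C m') (Cod C g) \<and> Comp C h m' = g)"
        using douglm unfolding douglian_morphism_def by blast
      moreover have "n \<in> Arr C" "Dom C n = Dom C m'" using B by simp_all
      ultimately have "\<exists>h. h \<in> hom C (Cod C m') (Cod C n) \<and> Comp C h m' = n"
        using mmnn by metis
      moreover have "Cod C m' = S" "Cod C n = T" using B by simp_all
      ultimately show ?thesis using that by metis
    qed
    note B2 = B hom_arr[OF hh]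
    define uu where "uu = Comp C (Star C m') (Comp C (Star C h) h)"
    have uuh: "uu \<in> hom C S W" unfolding uu_def using hh m'h star_hom comp_hom by blast
    have vvh: "Star C m' \<in> hom C S W" using m'h star_hom by blast
    have "Comp C uu m' = Comp C (Star C (Comp C h m')) (Comp C h m')" unfolding uu_def by (simp add: CS B2)
    also have "\<dots> = Comp C (Star C m') m'" using hm mmnn by simp
    finally have "uu = Star C m'" using EQ[OF uuh vvh] by blast
    hence "Star C uu = m'" using B2 by (simp add: CS)
    moreover have "Star C uu = Comp C (Comp C (Star C h) h) m'" unfolding uu_def by (simp add: CS B2)
    ultimately have "Comp C (Comp C (Star C h) h) m' = Comp C (Id C S) m'" using B2 by (simp add: CS)
    moreover have "Comp C (Star C h) h \<in> hom C S S" using hh star_hom comp_hom by blast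
    ultimately have hiso: "Comp C (Star C h) h = Id C S" using EQ id_hom[OF So] by blast
    have hs1: "Comp C h s1 = t1"
    proof -
      have "Comp C h s1 = Comp C (Comp C h m') j1" unfolding s1_def by (simp add: CS B2)
      thus ?thesis using hm n1 by simp
    qed
    have hs2: "Comp C h s2 = t2"
    proof -
      have "Comp C h s2 = Comp C (Comp C h m') j2" unfolding s2_def by (simp add: CS B2)
      thus ?thesis using hm n2 by simp
    qed
    have hI: "isometry C h" unfolding isometry_def using hiso B2 by simp
    show ?thesis
    proof (rule ex1I[of _ h])
      show "h \<in> hom C S T \<and> isometry C h \<and> Comp C h s1 = t1 \<and> Comp C h s2 = t2" using hh hI hs1 hs2 by blast
      fix t assume t: "t \<in> hom C S T \<and> isometry C t \<and> Comp C t s1 = t1 \<and> Comp C t s2 = t2"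
      have th: "t \<in> hom C S T" using t by blast
      note B3 = B2 hom_arr[OF th]
      have "Comp C t m' = Comp C h m'"
      proof (rule bp_copair_uniq[OF bW])
        show "Comp C t m' \<in> hom C W T" using th m'h comp_hom by blast
        show "Comp C h m' \<in> hom C W T" using hh m'h comp_hom by blast
        show "Comp C (Comp C t m') j1 = Comp C (Comp C h m') j1"
          using t hs1 s1d by (simp add: CS B3)
        show "Comp C (Comp C t m') j2 = Comp C (Comp C h m') j2"
          using t hs2 s2d by (simp add: CS B3)
      qed
      thus "t = h" using EQ th hh by blast
    qed
  qed
  show ?thesis unfolding codilator_def using codS univ by blast
qed

end

theorem corollary7p17:
  fixes C :: "('o, 'm) starcat" and f :: 'm
  assumes "douglian_pre_hilbert_star_category C"
    and "contraction C f"
  shows "\<exists>S s1 s2. codilator C f S s1 s2"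
proof -
  have sc0: "star_category C" using assms(1)
    unfolding douglian_pre_hilbert_star_category_def pre_hilbert_star_category_def by blast
  show ?thesis by (rule main[OF sc0 assms])
qed

end
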